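(* Let $v:\mathcal{X}\times\{\theta_1,\ldots,\theta_M\}\to[0,\infty)$ be measurable with ${\rm E}\big[\sum_{i=1}^M P(\theta_i|\mathbf{x})\,v(\mathbf{x},\theta_i)\big]<\infty$. Then the quantity ${\rm E}\big[u_{\hat\theta}(\mathbf{x},\theta)\,v(\mathbf{x},\theta)\big]$ takes the same value for every detector $\hat\theta$ if and only if there exists a measurable function $\zeta:\mathcal{X}\to[0,\infty)$ such that, for almost every $\mathbf{x}$, $$v(\mathbf{x},\theta_i)=\frac{\zeta(\mathbf{x})}{P(\theta_i|\mathbf{x})},\qquad i=1,\ldots,M .$$ In that case ${\rm E}[u_{\hat\theta}(\mathbf{x},\theta)v(\mathbf{x},\theta)]=(M-1)\,{\rm E}[\zeta(\mathbf{x})]$ for every detector $\hat\theta$.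
   Context: $M$-ary hypothesis testing: the true hypothesis $\theta$ is a random variable taking values in $\{\theta_1,\ldots,\theta_M\}$ with prior probabilities $P(\theta_i)$, and $\mathbf{x}$ is a random observation with values in a measurable space $\mathcal{X}$. $P(\theta_i|\mathbf{x})$ denotes the posterior probability of $\theta_i$ given $\mathbf{x}$; it is assumed that $P(\theta_i|\mathbf{x})>0$ for all $\mathbf{x}$ and all $i$. A detector is a measurable map $\hat\theta:\mathcal{X}\to\{\theta_1,\ldots,\theta_M\}$. For a detector $\hat\theta$, $u_{\hat\theta}(\mathbf{x},\theta)=\mathbf{1}_{\hat\theta(\mathbf{x})\neq\theta}$ (equal to $1$ if $\hat\theta(\mathbf{x})\neq\theta$ and $0$ otherwise). All expectations are with respect to the joint law of $(\mathbf{x},\theta)$. *)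

theory Defs
  imports "HOL-Probability.Probability"
begin

text \<open>Hypotheses theta_1..theta_M are encoded as indices 0..<m.
  The joint law of (x, theta) is given by the marginal law M of x
  (a probability measure on the observation space) together with the
  posterior kernel p i x = P(theta_i | x).\<close>

definition joint_expectation ::
  "'a measure \<Rightarrow> nat \<Rightarrow> (nat \<Rightarrow> 'a \<Rightarrow> real) \<Rightarrow> ('a \<Rightarrow> nat \<Rightarrow> real) \<Rightarrow> real" where
  "joint_expectation M m p f = (\<integral>x. (\<Sum>i<m. p i x * f x i) \<partial>M)"

definition detector :: "'a measure \<Rightarrow> nat \<Rightarrow> ('a \<Rightarrow> nat) \<Rightarrow> bool" where
  "detector M m d \<longleftrightarrow> d \<in> measurable M (count_space UNIV) \<and> (\<forall>x\<in>space M. d x < m)"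

definition err_ind :: "('a \<Rightarrow> nat) \<Rightarrow> 'a \<Rightarrow> nat \<Rightarrow> real" where
  "err_ind d x i = (if d x \<noteq> i then 1 else 0)"

end

theory Submission
  imports Defs
begin

lemma sum_err_split:
  fixes f :: "nat \<Rightarrow> real"
  assumes "a < m"
  shows "(\<Sum>k<m. (if a \<noteq> k then 1 else 0) * f k) = (\<Sum>k<m. f k) - f a"
proof -
  have "(\<Sum>k<m. (if a \<noteq> k then 1 else 0) * f k) = (\<Sum>k<m. f k - (if a = k then f k else 0))"
    by (rule sum.cong) auto
  also have "\<dots> = (\<Sum>k<m. f k) - f a"
    using assms by (simp add: sum_subtractf)
  finally show ?thesis .
qed

theorem theorem1:
  fixes M :: "'a measure" and m :: nat
    and p :: "nat \<Rightarrow> 'a \<Rightarrow> real" and v :: "'a \<Rightarrow> nat \<Rightarrow> real"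
  assumes "prob_space M"
    and p_meas: "\<And>i. i < m \<Longrightarrow> p i \<in> borel_measurable M"
    and p_pos: "\<And>i x. i < m \<Longrightarrow> x \<in> space M \<Longrightarrow> p i x > 0"
    and p_sum: "\<And>x. x \<in> space M \<Longrightarrow> (\<Sum>i<m. p i x) = 1"
    and v_meas: "\<And>i. i < m \<Longrightarrow> (\<lambda>x. v x i) \<in> borel_measurable M"
    and v_nonneg: "\<And>x i. x \<in> space M \<Longrightarrow> i < m \<Longrightarrow> v x i \<ge> 0"
    and v_int: "integrable M (\<lambda>x. \<Sum>i<m. p i x * v x i)"
  shows "((\<exists>c. \<forall>d. detector M m d \<longrightarrow>
              joint_expectation M m p (\<lambda>x i. err_ind d x i * v x i) = c)
          \<longleftrightarrow>
          (\<exists>\<zeta>. \<zeta> \<in> borel_measurable M \<and> (\<forall>x\<in>space M. \<zeta> x \<ge> 0) \<and>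
               (AE x in M. \<forall>i<m. v x i = \<zeta> x / p i x)))
       \<and>
       (\<forall>\<zeta>. \<zeta> \<in> borel_measurable M \<and> (\<forall>x\<in>space M. \<zeta> x \<ge> 0) \<and>
               (AE x in M. \<forall>i<m. v x i = \<zeta> x / p i x) \<longrightarrow>
            (\<forall>d. detector M m d \<longrightarrow>
               joint_expectation M m p (\<lambda>x i. err_ind d x i * v x i)
                 = (real m - 1) * (\<integral>x. \<zeta> x \<partial>M)))"
proof -
  interpret prob_space M by fact
  define w where "w k x = p k x * v x k" for k x
  define S where "S x = (\<Sum>k<m. w k x)" for x
  have w_meas: "w k \<in> borel_measurable M" if "k < m" for k
    unfolding w_def using p_meas[OF that] v_meas[OF that] by measurable
  have w_nn: "w k x \<ge> 0" if "k < m" "x \<in> space M" for k x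
    unfolding w_def using p_pos[OF that] v_nonneg[OF that(2,1)] by simp
  have S_int: "integrable M S" using v_int unfolding S_def w_def by simp
  have w_le: "w k x \<le> S x" if "k < m" "x \<in> space M" for k x
    unfolding S_def using that w_nn by (intro member_le_sum) auto
  have w_int: "integrable M (w k)" if "k < m" for k
    by (rule Bochner_Integration.integrable_bound[OF S_int w_meas[OF that]])
       (auto intro!: AE_I2 simp: w_nn that intro: order_trans[OF w_le abs_ge_self])
  have partA: "joint_expectation M m p (\<lambda>x i. err_ind d x i * v x i) = (real m - 1) * (\<integral>x. \<zeta> x \<partial>M)"
    if z: "\<zeta> \<in> borel_measurable M" "AE x in M. \<forall>i<m. v x i = \<zeta> x / p i x"
      and d: "detector M m d" for \<zeta> d
  proof -
    have dm: "d \<in> measurable M (count_space UNIV)" and dlt: "\<And>x. x \<in> space M \<Longrightarrow> d x < m"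
      using d unfolding detector_def by auto
    have "AE x in M. (\<Sum>i<m. p i x * (err_ind d x i * v x i)) = (real m - 1) * \<zeta> x"
      using z(2) AE_space
    proof eventually_elim
      case (elim x)
      have "(\<Sum>i<m. p i x * (err_ind d x i * v x i)) = (\<Sum>i<m. (if d x \<noteq> i then 1 else 0) * \<zeta> x)"
      proof (intro sum.cong refl)
        fix i assume "i \<in> {..<m}"
        then have "p i x \<noteq> 0" using p_pos[of i x] elim(2) by auto
        then show "p i x * (err_ind d x i * v x i) = (if d x \<noteq> i then 1 else 0) * \<zeta> x"
          using elim(1) \<open>i \<in> {..<m}\<close> by (simp add: err_ind_def)
      qed
      also have "\<dots> = real m * \<zeta> x - \<zeta> x"
        using sum_err_split[OF dlt[OF elim(2)], of "\<lambda>_. \<zeta> x"] by simp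
      finally show ?case by (simp add: algebra_simps)
    qed
    moreover have em: "(\<lambda>x. err_ind d x i) \<in> borel_measurable M" for i
    proof -
      have "(\<lambda>x. (\<lambda>n. if n \<noteq> i then 1 else (0::real)) (d x)) \<in> borel_measurable M"
        by (rule measurable_compose[OF dm]) simp
      then show ?thesis by (simp add: err_ind_def)
    qed
    moreover have "(\<lambda>x. \<Sum>i<m. p i x * (err_ind d x i * v x i)) \<in> borel_measurable M"
      by (intro borel_measurable_sum borel_measurable_times p_meas v_meas em) auto
    ultimately have "joint_expectation M m p (\<lambda>x i. err_ind d x i * v x i) = (\<integral>x. (real m - 1) * \<zeta> x \<partial>M)"
      unfolding joint_expectation_def using z(1) by (intro integral_cong_AE) auto
    then show ?thesis by simp
  qed
  have Ed: "joint_expectation M m p (\<lambda>x i. err_ind d x i * v x i) = (\<integral>x. S x \<partial>M) - (\<integral>x. w (d x) x \<partial>M)"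
    if d: "detector M m d" and di: "integrable M (\<lambda>x. w (d x) x)" for d
  proof -
    have dlt: "\<And>x. x \<in> space M \<Longrightarrow> d x < m"
      using d unfolding detector_def by auto
    have "joint_expectation M m p (\<lambda>x i. err_ind d x i * v x i) = (\<integral>x. S x - w (d x) x \<partial>M)"
      unfolding joint_expectation_def
    proof (rule Bochner_Integration.integral_cong[OF refl])
      fix x assume x: "x \<in> space M"
      have "(\<Sum>i<m. p i x * (err_ind d x i * v x i)) = (\<Sum>i<m. (if d x \<noteq> i then 1 else 0) * w i x)"
        by (intro sum.cong refl) (simp add: err_ind_def w_def)
      also have "\<dots> = S x - w (d x) x"
        unfolding S_def by (rule sum_err_split[OF dlt[OF x]])
      finally show "(\<Sum>i<m. p i x * (err_ind d x i * v x i)) = S x - w (d x) x" .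
    qed
    also have "\<dots> = (\<integral>x. S x \<partial>M) - (\<integral>x. w (d x) x \<partial>M)"
      by (rule Bochner_Integration.integral_diff[OF S_int di])
    finally show ?thesis .
  qed
  have pair: "AE x in M. w i x \<le> w j x"
    if c: "\<forall>d. detector M m d \<longrightarrow> joint_expectation M m p (\<lambda>x i. err_ind d x i * v x i) = c"
      and ij: "i < m" "j < m" for c i j
  proof -
    have [measurable]: "w i \<in> borel_measurable M" "w j \<in> borel_measurable M"
      using w_meas ij by auto
    define d1 where "d1 x = (if w i x > w j x then i else j)" for x
    have "d1 \<in> measurable M (count_space UNIV)" unfolding d1_def by measurable
    then have det1: "detector M m d1" using ij unfolding detector_def d1_def by auto
    have det2: "detector M m (\<lambda>_. j)" using ij unfolding detector_def by auto
    have e1: "(\<lambda>x. w (d1 x) x) = (\<lambda>x. max (w i x) (w j x))"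
      unfolding d1_def by (auto simp: max_def)
    have mi: "integrable M (\<lambda>x. max (w i x) (w j x))"
      using w_int ij by (intro integrable_max) auto
    have "(\<integral>x. S x \<partial>M) - (\<integral>x. max (w i x) (w j x) \<partial>M) = (\<integral>x. S x \<partial>M) - (\<integral>x. w j x \<partial>M)"
      using Ed[OF det1] Ed[OF det2] c det1 det2 mi w_int[OF ij(2)] e1 by auto
    then have "(\<integral>x. max (w i x) (w j x) - w j x \<partial>M) = 0"
      using Bochner_Integration.integral_diff[OF mi w_int[OF ij(2)]] by simp
    then have "AE x in M. max (w i x) (w j x) - w j x = 0"
      using integral_nonneg_eq_0_iff_AE[of M "\<lambda>x. max (w i x) (w j x) - w j x"]
        mi w_int[OF ij(2)] by auto
    then show ?thesis by eventually_elim auto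
  qed
  have partB: "\<exists>\<zeta>. \<zeta> \<in> borel_measurable M \<and> (\<forall>x\<in>space M. \<zeta> x \<ge> 0) \<and>
               (AE x in M. \<forall>i<m. v x i = \<zeta> x / p i x)"
    if c: "\<forall>d. detector M m d \<longrightarrow> joint_expectation M m p (\<lambda>x i. err_ind d x i * v x i) = c" for c
  proof (cases "m = 0")
    case True
    then show ?thesis by (intro exI[of _ "\<lambda>_. 0"]) auto
  next
    case False
    then have m0: "0 < m" by simp
    have "AE x in M. \<forall>i\<in>{..<m}. w i x = w 0 x"
    proof (rule AE_finite_allI)
      fix i assume "i \<in> {..<m}"
      then have "i < m" by simp
      from pair[OF c this m0] pair[OF c m0 this]
      show "AE x in M. w i x = w 0 x" by eventually_elim auto
    qed simp
    then have "AE x in M. \<forall>i<m. v x i = w 0 x / p i x"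
      using AE_space
    proof eventually_elim
      case (elim x)
      show ?case
      proof (intro allI impI)
        fix i assume i: "i < m"
        have "p i x \<noteq> 0" using p_pos[OF i elim(2)] by simp
        have "w i x = w 0 x" using elim(1) i by (meson lessThan_iff)
        moreover have "v x i = w i x / p i x" using \<open>p i x \<noteq> 0\<close> by (simp add: w_def)
        ultimately show "v x i = w 0 x / p i x" by simp
      qed
    qed
    then show ?thesis using w_meas[OF m0] w_nn[OF m0] by (intro exI[of _ "w 0"]) auto
  qed
  show ?thesis
  proof (intro conjI iffI allI impI)
    assume "\<exists>c. \<forall>d. detector M m d \<longrightarrow> joint_expectation M m p (\<lambda>x i. err_ind d x i * v x i) = c"
    then show "\<exists>\<zeta>. \<zeta> \<in> borel_measurable M \<and> (\<forall>x\<in>space M. \<zeta> x \<ge> 0) \<and>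
               (AE x in M. \<forall>i<m. v x i = \<zeta> x / p i x)" using partB by blast
  next
    assume "\<exists>\<zeta>. \<zeta> \<in> borel_measurable M \<and> (\<forall>x\<in>space M. \<zeta> x \<ge> 0) \<and>
               (AE x in M. \<forall>i<m. v x i = \<zeta> x / p i x)"
    then show "\<exists>c. \<forall>d. detector M m d \<longrightarrow> joint_expectation M m p (\<lambda>x i. err_ind d x i * v x i) = c"
      using partA by blast
  next
    fix \<zeta> d
    assume "\<zeta> \<in> borel_measurable M \<and> (\<forall>x\<in>space M. \<zeta> x \<ge> 0) \<and>
               (AE x in M. \<forall>i<m. v x i = \<zeta> x / p i x)" "detector M m d"
    then show "joint_expectation M m p (\<lambda>x i. err_ind d x i * v x i) = (real m - 1) * (\<integral>x. \<zeta> x \<partial>M)"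
      using partA by blast
  qed
qed
end
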